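(* Let $m\ge 2$. For every $N\ge m$ and every integer $d$ with $1\le d\le N-m+1$, the degree of the vertex $v_m$ in the RRH of size $N$ satisfies $$\Pr[d(v_m)=d]=(m-1)\,\frac{\Gamma(N-d)\,\Gamma(N-m+1)}{\Gamma(N-d-m+2)\,\Gamma(N)}.$$ In particular, for $m=2$ the degree of $v_2$ is uniformly distributed on $\{1,\dots,N-1\}$, and for $m=3$, $\Pr[d(v_3)=d]=\frac{2(N-d-1)}{(N-1)(N-2)}$.
   Context: A random recursive hypergraph (RRH) is the random hypergraph process defined as follows. At size $N=1$ it has vertex set $\{v_1\}$ and edge set $\{\{v_1\}\}$. Given the hypergraph of size $N$ (vertices $v_1,\dots,v_N$, exactly $N$ edges), one chooses an existing edge $e$ uniformly at random, independently of the past, and adds a new vertex $v_{N+1}$ together with the new edge $e\cup\{v_{N+1}\}$. The degree $d(v)$ of a vertex $v$ is the number of edges containing it. *)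

theory Defs
  imports "HOL-Probability.Probability"
begin

text \<open>Vertex v_i is represented by the natural number i. A hypergraph is represented
by its set of edges (all edges of an RRH are distinct sets, since each new edge contains
the new vertex). rrh N is the distribution of the random recursive hypergraph of size N
(for N = 0 it is a dummy empty hypergraph, never used).\<close>

fun rrh :: "nat \<Rightarrow> nat set set pmf" where
  "rrh 0 = return_pmf {}"
| "rrh (Suc 0) = return_pmf {{1}}"
| "rrh (Suc (Suc n)) =
     bind_pmf (rrh (Suc n))
       (\<lambda>E. map_pmf (\<lambda>e. insert (insert (Suc (Suc n)) e) E) (pmf_of_set E))"

definition hdegree :: "nat \<Rightarrow> nat set set \<Rightarrow> nat" where
  "hdegree v E = card {e \<in> E. v \<in> e}"

end

theory Submission imports Defs "HOL-Analysis.Analysis" begin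

lemma rrh_Suc: "n \<ge> 1 \<Longrightarrow> rrh (Suc n) = bind_pmf (rrh n) (\<lambda>E. map_pmf (\<lambda>e. insert (insert (Suc n) e) E) (pmf_of_set E))"
  by (cases n) auto

lemma rrh_inv: "n \<ge> 1 \<Longrightarrow> E \<in> set_pmf (rrh n) \<Longrightarrow> finite E \<and> card E = n \<and> (\<forall>e\<in>E. e \<subseteq> {1..n})"
proof (induction n arbitrary: E)
  case 0 then show ?case by simp
next
  case (Suc n)
  show ?case
  proof (cases "n = 0")
    case True then show ?thesis using Suc by auto
  next
    case False
    then have n1: "n \<ge> 1" by simp
    from Suc.prems(2) obtain E0 e where E0: "E0 \<in> set_pmf (rrh n)" and e: "e \<in> set_pmf (pmf_of_set E0)" and EE: "E = insert (insert (Suc n) e) E0"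
      by (auto simp: rrh_Suc[OF n1])
    from Suc.IH[OF n1 E0] have IH: "finite E0" "card E0 = n" "\<forall>e\<in>E0. e \<subseteq> {1..n}" by auto
    have ne: "E0 \<noteq> {}" using IH n1 by auto
    have eE0: "e \<in> E0" using e set_pmf_of_set[OF ne IH(1)] by simp
    have notin: "insert (Suc n) e \<notin> E0" using IH(3) by auto
    have sub: "insert (Suc n) e \<subseteq> {1..Suc n}" using IH(3) eE0 by fastforce
    have sub2: "\<forall>e\<in>E0. e \<subseteq> {1..Suc n}" using IH(3) by fastforce
    show ?thesis using IH notin sub sub2 EE by (simp add: card_insert_disjoint)
  qed
qed

lemma hdeg_insert: "x \<notin> E \<Longrightarrow> finite E \<Longrightarrow> hdegree m (insert x E) = hdegree m E + (if m \<in> x then 1 else 0)"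
proof (cases "m \<in> x")
  case True
  assume a: "x \<notin> E" "finite E"
  have "{e \<in> insert x E. m \<in> e} = insert x {e \<in> E. m \<in> e}" using True by auto
  then show ?thesis using True a unfolding hdegree_def by (simp add: card_insert_disjoint)
next
  case False
  assume a: "x \<notin> E" "finite E"
  have "{e \<in> insert x E. m \<in> e} = {e \<in> E. m \<in> e}" using False by auto
  then show ?thesis using False a unfolding hdegree_def by simp
qed

definition P :: "nat \<Rightarrow> nat \<Rightarrow> nat \<Rightarrow> real" where
  "P m n d = measure_pmf.prob (rrh n) {E. hdegree m E = d}"

lemma local_step:
  assumes n1: "n \<ge> 1" and mn: "m \<le> n" and E: "E \<in> set_pmf (rrh n)"
  shows "measure_pmf.prob (pmf_of_set E) {e. hdegree m (insert (insert (Suc n) e) E) = d}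
     = (if hdegree m E = d then real (n - hdegree m E) / n else 0) + (if Suc (hdegree m E) = d then real (hdegree m E) / n else 0)"
proof -
  from rrh_inv[OF n1 E] have I: "finite E" "card E = n" "\<forall>e\<in>E. e \<subseteq> {1..n}" by auto
  have ne: "E \<noteq> {}" using I n1 by auto
  define k where "k = hdegree m E"
  have hk: "hdegree m (insert (insert (Suc n) e) E) = k + (if m \<in> e then 1 else 0)" if "e \<in> E" for e
  proof -
    have "insert (Suc n) e \<notin> E" using I(3) by auto
    moreover have "(m \<in> insert (Suc n) e) = (m \<in> e)" using mn by auto
    ultimately show ?thesis using hdeg_insert[OF _ I(1)] k_def by simp
  qed
  have S: "E \<inter> {e. hdegree m (insert (insert (Suc n) e) E) = d} = {e \<in> E. k + (if m \<in> e then 1 else 0) = d}"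
    using hk by auto
  have c1: "card {e \<in> E. m \<in> e} = k" unfolding k_def hdegree_def ..
  have c2: "card {e \<in> E. m \<notin> e} = n - k"
  proof -
    have "{e \<in> E. m \<notin> e} = E - {e \<in> E. m \<in> e}" by auto
    then show ?thesis using I c1 by (simp add: card_Diff_subset)
  qed
  have "measure_pmf.prob (pmf_of_set E) {e. hdegree m (insert (insert (Suc n) e) E) = d}
      = card {e \<in> E. k + (if m \<in> e then 1 else 0) = d} / n"
    using measure_pmf_of_set[OF ne I(1)] S I(2) by simp
  also have "\<dots> = (if k = d then real (n - k) / n else 0) + (if Suc k = d then real k / n else 0)"
  proof (cases "k = d")
    case True
    then have "{e \<in> E. k + (if m \<in> e then 1 else 0) = d} = {e \<in> E. m \<notin> e}" by auto
    then show ?thesis using True c2 by simp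
  next
    case False
    show ?thesis
    proof (cases "Suc k = d")
      case True
      then have "{e \<in> E. k + (if m \<in> e then 1 else 0) = d} = {e \<in> E. m \<in> e}" by auto
      then show ?thesis using True c1 by simp
    next
      case F2: False
      then have "{e \<in> E. k + (if m \<in> e then 1 else 0) = d} = {}" using False by auto
      then show ?thesis using False F2 by simp
    qed
  qed
  finally show ?thesis unfolding k_def .
qed

lemma P_step:
  assumes n1: "n \<ge> 1" and mn: "m \<le> n" and d1: "d \<ge> 1"
  shows "P m (Suc n) d = P m n d * real (n - d) / n + P m n (d - 1) * real (d - 1) / n"
proof -
  define f where "f k = (if k = d then real (n - k) / n else 0) + (if Suc k = d then real k / n else 0)" for k
  have "P m (Suc n) d = pmf (map_pmf (hdegree m) (rrh (Suc n))) d"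
    unfolding P_def pmf_map by (simp add: vimage_def)
  also have "\<dots> = (\<integral>E. pmf (map_pmf (hdegree m) (map_pmf (\<lambda>e. insert (insert (Suc n) e) E) (pmf_of_set E))) d \<partial>rrh n)"
    unfolding rrh_Suc[OF n1] map_bind_pmf pmf_bind ..
  also have "\<dots> = (\<integral>E. f (hdegree m E) \<partial>rrh n)"
  proof (rule integral_cong_AE)
    show "AE E in measure_pmf (rrh n). pmf (map_pmf (hdegree m) (map_pmf (\<lambda>e. insert (insert (Suc n) e) E) (pmf_of_set E))) d = f (hdegree m E)"
    proof (rule AE_pmfI)
      fix E assume E: "E \<in> set_pmf (rrh n)"
      show "pmf (map_pmf (hdegree m) (map_pmf (\<lambda>e. insert (insert (Suc n) e) E) (pmf_of_set E))) d = f (hdegree m E)"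
        unfolding pmf_map measure_map_pmf f_def local_step[OF n1 mn E, symmetric]
        by (simp add: vimage_def)
    qed
  qed auto
  also have "\<dots> = (\<integral>k. f k \<partial>map_pmf (hdegree m) (rrh n))" by simp
  also have "\<dots> = (\<Sum>k\<in>{d-1, d}. f k * pmf (map_pmf (hdegree m) (rrh n)) k)"
    by (rule integral_measure_pmf_real) (auto simp: f_def split: if_splits)
  also have "\<dots> = f (d-1) * P m n (d-1) + f d * P m n d"
    using d1 by (simp add: P_def pmf_map vimage_def)
  also have "\<dots> = P m n d * real (n - d) / n + P m n (d - 1) * real (d - 1) / n"
    using d1 by (simp add: f_def) (simp add: field_simps)
  finally show ?thesis .
qed

lemma P_base:
  assumes m2: "m \<ge> 2"
  shows "P m m d = (if d = 1 then 1 else 0)"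
proof -
  have deg1: "hdegree m E = 1" if E: "E \<in> set_pmf (rrh m)" for E
  proof -
    have n1: "m - 1 \<ge> 1" and mS: "m = Suc (m - 1)" using m2 by auto
    from E obtain E0 e where E0: "E0 \<in> set_pmf (rrh (m-1))" and EE: "E = insert (insert m e) E0"
      using rrh_Suc[OF n1] mS by (metis (no_types, lifting) map_pmf_def set_bind_pmf set_map_pmf UN_E imageE)
    from rrh_inv[OF n1 E0] have I: "finite E0" "\<forall>e\<in>E0. e \<subseteq> {1..m-1}" by auto
    have ni: "insert m e \<notin> E0" using I(2) m2 by fastforce
    have "hdegree m E0 = 0" unfolding hdegree_def using I m2 by fastforce
    then show ?thesis using hdeg_insert[OF ni I(1)] EE by simp
  qed
  show ?thesis
  proof (cases "d = 1")
    case True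
    have "measure_pmf.prob (rrh m) {E. hdegree m E = d} = 1"
      by (subst measure_pmf.prob_eq_1) (auto simp: True intro!: AE_pmfI dest: deg1)
    then show ?thesis using True by (simp add: P_def)
  next
    case False
    have "measure_pmf.prob (rrh m) {E. hdegree m E = d} = 0"
      unfolding measure_pmf_zero_iff using deg1 False by auto
    then show ?thesis using False by (simp add: P_def)
  qed
qed

definition Q :: "nat \<Rightarrow> nat \<Rightarrow> nat \<Rightarrow> real" where
  "Q m n d = (if d \<le> n + 1 - m then real ((n - d - 1) choose (m - 2)) / real ((n - 1) choose (m - 1)) else 0)"

lemma Q_step:
  assumes m2: "m \<ge> 2" and mn: "m \<le> n" and d1: "d \<ge> 1"
  shows "Q m (Suc n) d = Q m n d * real (n - d) / n + (if d = 1 then 0 else Q m n (d - 1)) * real (d - 1) / n"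
proof -
  define c where "c = real ((n - 1) choose (m - 1))"
  define B where "B = real (n choose (m - 1))"
  have cpos: "c > 0" unfolding c_def using mn by simp
  have Bpos: "B > 0" unfolding B_def using mn by simp
  have npos: "real n > 0" using mn m2 by simp
  have nat1: "(n - (m - 1)) * (n choose (m - 1)) = n * ((n - 1) choose (m - 1))" by (rule binomial_absorb_comp)
  have BcEq: "B * (real n - real m + 1) = real n * c"
  proof -
    have "real (n - (m - 1)) * B = real n * c" unfolding B_def c_def by (metis nat1 of_nat_mult)
    moreover have "real (n - (m - 1)) = real n - real m + 1" using mn m2 by (simp add: of_nat_diff)
    ultimately show ?thesis by (simp add: algebra_simps)
  qed
  consider (A) "d \<le> n + 1 - m" | (Bc) "d = n + 2 - m" | (C) "d > n + 2 - m" by linarith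
  then show ?thesis
  proof cases
    case A
    define X where "X = real ((n - d) choose (m - 2))"
    define Y where "Y = real ((n - d - 1) choose (m - 2))"
    have nat2: "(n - d - (m - 2)) * ((n - d) choose (m - 2)) = (n - d) * ((n - d - 1) choose (m - 2))"
      by (rule binomial_absorb_comp)
    have XY: "(real n - real d - real m + 2) * X = (real n - real d) * Y"
    proof -
      have a: "real (n - d - (m - 2)) * X = real (n - d) * Y" unfolding X_def Y_def by (metis nat2 of_nat_mult)
      have b: "real (n - d - (m - 2)) = real n - real d - real m + 2" using A m2 mn by (simp add: of_nat_diff)
      have c: "real (n - d) = real n - real d" using A m2 mn by (simp add: of_nat_diff)
      show ?thesis using a unfolding b c .
    qed
    have lhs: "Q m (Suc n) d = X / B" using A unfolding Q_def X_def B_def by simp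
    have q1: "Q m n d = Y / c" using A unfolding Q_def Y_def c_def by simp
    have q2: "(if d = 1 then 0 else Q m n (d - 1)) * real (d - 1) = X / c * real (d - 1)"
    proof (cases "d = 1")
      case False
      have "n - (d - 1) - 1 = n - d" using d1 A by simp
      then show ?thesis using False A d1 unfolding Q_def X_def c_def by simp
    qed simp
    have e1: "real (n - d) = real n - real d" using A m2 by (simp add: of_nat_diff)
    have e2: "real (d - 1) = real d - 1" using d1 by (simp add: of_nat_diff)
    have "X / B = (Y / c * (real n - real d) + X / c * (real d - 1)) / real n"
    proof -
      have "Y / c * (real n - real d) + X / c * (real d - 1) = ((real n - real d) * Y + X * (real d - 1)) / c"
        by (simp add: add_divide_distrib mult.commute)
      also have "\<dots> = ((real n - real d - real m + 2) * X + X * (real d - 1)) / c"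
        unfolding XY by (rule refl)
      also have "\<dots> = X * (real n - real m + 1) / c" by (simp add: algebra_simps)
      also have "\<dots> = X * (B * (real n - real m + 1)) / (B * c)" using Bpos by simp
      also have "\<dots> = X * real n / B" using BcEq cpos by simp
      finally show ?thesis using npos by simp
    qed
    then show ?thesis using lhs q1 q2 e1 e2 by (simp add: add_divide_distrib)
  next
    case Bc
    have dge2: "d \<ge> 2" using Bc mn by simp
    have lhs: "Q m (Suc n) d = 1 / B"
    proof -
      have "Suc n - d - 1 = m - 2" using Bc mn m2 by simp
      moreover have "d \<le> Suc n + 1 - m" using Bc mn by simp
      ultimately show ?thesis unfolding Q_def B_def by simp
    qed
    have q1: "Q m n d = 0" using Bc mn m2 unfolding Q_def by simp
    have q2: "Q m n (d - 1) = 1 / c"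
    proof -
      have "n - (d - 1) - 1 = m - 2" using Bc mn m2 by simp
      moreover have "d - 1 \<le> n + 1 - m" using Bc mn by simp
      ultimately show ?thesis unfolding Q_def c_def by simp
    qed
    have e2: "real (d - 1) = real n - real m + 1" using Bc mn m2 by (simp add: of_nat_diff)
    have "1 / B = 1 / c * (real n - real m + 1) / real n"
      using BcEq Bpos cpos npos by (simp add: field_simps)
    then show ?thesis using lhs q1 q2 e2 dge2 by simp
  next
    case C
    then show ?thesis using mn m2 unfolding Q_def by auto
  qed
qed

lemma P_Q:
  assumes m2: "m \<ge> 2" and mn: "m \<le> n"
  shows "\<forall>d. d \<ge> 1 \<longrightarrow> P m n d = Q m n d"
  using mn
proof (induction n rule: dec_induct)
  case base
  show ?case
  proof (intro allI impI)
    fix d :: nat assume d1: "d \<ge> 1"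
    show "P m m d = Q m m d"
      using P_base[OF m2, of d] d1 m2 unfolding Q_def by (auto simp: numeral_2_eq_2)
  qed
next
  case (step n)
  show ?case
  proof (intro allI impI)
    fix d :: nat assume d1: "d \<ge> 1"
    have n1: "n \<ge> 1" using step m2 by simp
    have "P m (Suc n) d = P m n d * real (n - d) / n + P m n (d - 1) * real (d - 1) / n"
      by (rule P_step[OF n1 step(1) d1])
    also have "\<dots> = Q m n d * real (n - d) / n + (if d = 1 then 0 else Q m n (d - 1)) * real (d - 1) / n"
      using step(3) d1 by auto
    also have "\<dots> = Q m (Suc n) d" by (rule Q_step[OF m2 step(1) d1, symmetric])
    finally show "P m (Suc n) d = Q m (Suc n) d" .
  qed
qed

lemma closed:
  assumes m2: "m \<ge> 2" and mN: "m \<le> N" and d1: "1 \<le> d" and dN: "d \<le> N - m + 1"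
  shows "measure_pmf.prob (rrh N) {E. hdegree m E = d} = real ((N - d - 1) choose (m - 2)) / real ((N - 1) choose (m - 1))"
proof -
  have "P m N d = Q m N d" using P_Q[OF m2 mN] d1 by simp
  then show ?thesis using dN mN unfolding P_def Q_def by simp
qed

lemma aux_frac: fixes a b c e fm k :: real
  assumes "fm \<noteq> 0" "c \<noteq> 0" "e \<noteq> 0" "b \<noteq> 0"
  shows "(a / (fm * c)) / (e / ((k * fm) * b)) = k * a * b / (c * e)"
  using assms by (simp add: field_simps)

theorem mainTheorem10:
  fixes m :: nat
  assumes "m \<ge> 2"
  shows "(\<forall>N d. N \<ge> m \<and> 1 \<le> d \<and> d \<le> N - m + 1 \<longrightarrow>
            measure_pmf.prob (rrh N) {E. hdegree m E = d}
            = real (m - 1) * Gamma (real N - real d) * Gamma (real N - real m + 1)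
              / (Gamma (real N - real d - real m + 2) * Gamma (real N)))
       \<and> (\<forall>N d. N \<ge> 2 \<and> 1 \<le> d \<and> d \<le> N - 1 \<longrightarrow>
            measure_pmf.prob (rrh N) {E. hdegree 2 E = d} = 1 / real (N - 1))
       \<and> (\<forall>N d. N \<ge> 3 \<and> 1 \<le> d \<and> d \<le> N - 2 \<longrightarrow>
            measure_pmf.prob (rrh N) {E. hdegree 3 E = d}
            = 2 * (real N - real d - 1) / ((real N - 1) * (real N - 2)))"
proof (intro conjI allI impI)
  fix N d assume h: "N \<ge> m \<and> 1 \<le> d \<and> d \<le> N - m + 1"
  then have mN: "m \<le> N" and d1: "1 \<le> d" and dN: "d \<le> N - m + 1" by auto
  have g1: "Gamma (real N - real d) = fact (N - d - 1)"
  proof -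
    have "real N - real d = 1 + real (N - d - 1)" using mN dN assms by (simp add: of_nat_diff)
    then show ?thesis by (simp only: Gamma_fact)
  qed
  have g2: "Gamma (real N - real m + 1) = fact (N - m)"
  proof -
    have "real N - real m + 1 = 1 + real (N - m)" using mN by (simp add: of_nat_diff)
    then show ?thesis by (simp only: Gamma_fact)
  qed
  have g3: "Gamma (real N - real d - real m + 2) = fact (N - d - 1 - (m - 2))"
  proof -
    have "real N - real d - real m + 2 = 1 + real (N - d - 1 - (m - 2))" using mN dN assms by (simp add: of_nat_diff)
    then show ?thesis by (simp only: Gamma_fact)
  qed
  have g4: "Gamma (real N) = fact (N - 1)"
  proof -
    have "real N = 1 + real (N - 1)" using mN assms by (simp add: of_nat_diff)
    then show ?thesis by (simp only: Gamma_fact)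
  qed
  have b1: "real ((N - d - 1) choose (m - 2)) = fact (N - d - 1) / (fact (m - 2) * fact (N - d - 1 - (m - 2)))"
    by (rule binomial_fact) (use mN dN assms in linarith)
  have b2: "real ((N - 1) choose (m - 1)) = fact (N - 1) / (fact (m - 1) * fact (N - m))"
  proof -
    have "N - 1 - (m - 1) = N - m" using assms by simp
    then show ?thesis using binomial_fact[of "m - 1" "N - 1", where 'a=real] mN by simp
  qed
  have f: "(fact (m - 1) :: real) = real (m - 1) * fact (m - 2)"
  proof -
    have "m - 1 = Suc (m - 2)" using assms by simp
    then show ?thesis by (simp only: fact_Suc)
  qed
  show "measure_pmf.prob (rrh N) {E. hdegree m E = d}
            = real (m - 1) * Gamma (real N - real d) * Gamma (real N - real m + 1)
              / (Gamma (real N - real d - real m + 2) * Gamma (real N))"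
    unfolding closed[OF assms mN d1 dN] g1 g2 g3 g4 b1 b2 f
    by (rule aux_frac) auto
next
  fix N d :: nat assume h: "N \<ge> 2 \<and> 1 \<le> d \<and> d \<le> N - 1"
  have dd: "d \<le> N - 2 + 1" using h by linarith
  have "measure_pmf.prob (rrh N) {E. hdegree 2 E = d} = real ((N - d - 1) choose (2 - 2)) / real ((N - 1) choose (2 - 1))"
    by (rule closed) (use h dd in auto)
  then have "measure_pmf.prob (rrh N) {E. hdegree 2 E = d} = real ((N - d - 1) choose 0) / real ((N - 1) choose 1)"
    by simp
  then show "measure_pmf.prob (rrh N) {E. hdegree 2 E = d} = 1 / real (N - 1)" by simp
next
  fix N d :: nat assume h: "N \<ge> 3 \<and> 1 \<le> d \<and> d \<le> N - 2"
  have dd: "d \<le> N - 3 + 1" using h by linarith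
  have "measure_pmf.prob (rrh N) {E. hdegree 3 E = d} = real ((N - d - 1) choose (3 - 2)) / real ((N - 1) choose (3 - 1))"
    by (rule closed) (use h dd in auto)
  then have "measure_pmf.prob (rrh N) {E. hdegree 3 E = d} = real ((N - d - 1) choose 1) / real ((N - 1) choose 2)"
    by simp
  also have "\<dots> = 2 * (real N - real d - 1) / ((real N - 1) * (real N - 2))"
  proof -
    define k where "k = N - 2"
    have k: "N = Suc (Suc k)" using h unfolding k_def by linarith
    have e1: "N - 1 = Suc k" "N - 2 = k" using k by simp_all
    have "2 * ((N - 1) choose 2) = (N - 1) * (N - 2)" unfolding e1
      using Suc_times_binomial[of 1 k] by (simp only: Suc_1 choose_one)
    then have "real (2 * ((N - 1) choose 2)) = real ((N - 1) * (N - 2))" by (simp only:)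
    then have C2: "real ((N - 1) choose 2) = (real N - 1) * (real N - 2) / 2" using k by (simp add: algebra_simps)
    have sd: "Suc d \<le> N" using h by linarith
    have r1: "real ((N - d - 1) choose 1) = real N - real d - 1" using sd by (simp add: of_nat_diff)
    have p1: "real N - 1 > 0" "real N - 2 > 0" using h by auto
    have pos: "(real N - 1) * (real N - 2) > 0" using p1 by simp
    show ?thesis unfolding C2 r1 using pos by (simp add: field_simps)
  qed
  finally show "measure_pmf.prob (rrh N) {E. hdegree 3 E = d} = 2 * (real N - real d - 1) / ((real N - 1) * (real N - 2))" .
qed

end
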